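(* For any parameter $\theta$ of the model $f(\cdot;\theta)$ (indeed for any classifier $f:\mathbb R^{M\times d}\to\mathbb R$), if $\tau\ge\|\boldsymbol\mu\|_2$ then the robust test error satisfies $L_D^{\mathrm{rob}}(\theta)\ge 1/4$.
   Context: Data distribution $D$: fix $\boldsymbol\mu_+,\boldsymbol\mu_-\in\mathbb R^d$ with $\|\boldsymbol\mu_+\|_2=\|\boldsymbol\mu_-\|_2=:\|\boldsymbol\mu\|_2$ and $\langle\boldsymbol\mu_+,\boldsymbol\mu_-\rangle=0$. A sample is $(\mathbf X,y)$ with $\mathbf X=(\mathbf x_1,\dots,\mathbf x_M)^\top\in\mathbb R^{M\times d}$, $y\in\{\pm1\}$ uniform; $\mathbf x_1=\boldsymbol\mu_+$ if $y=1$ and $\mathbf x_1=\boldsymbol\mu_-$ if $y=-1$; $\mathbf x_2,\dots,\mathbf x_M$ are i.i.d. noise vectors $\boldsymbol\xi_i\sim\mathcal N\big(0,\sigma_p^2(\mathbf I-\boldsymbol\mu_+\boldsymbol\mu_+^\top\|\boldsymbol\mu\|_2^{-2}-\boldsymbol\mu_-\boldsymbol\mu_-^\top\|\boldsymbol\mu\|_2^{-2})\big)$. Perturbation set $B(\mathbf X,\tau)=\{\widetilde{\mathbf X}=(\widetilde{\mathbf x}_1,\dots,\widetilde{\mathbf x}_M)^\top:\|\widetilde{\mathbf x}_m-\mathbf x_m\|_2\le\tau\ \forall m\}$. Robust test error $L_D^{\mathrm{rob}}(\theta)=\mathbb E_{(\mathbf X,y)\sim D}\max_{\widetilde{\mathbf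 X}\in B(\mathbf X,\tau)}\mathbb 1(yf(\widetilde{\mathbf X},\theta)\le0)$. *)

theory Defs
  imports "HOL-Probability.Probability"
begin

text \<open>Samples X are M x d matrices, represented as real^'d^'m (row i is X $ i),
  with a designated row index i0 playing the role of the first row x_1.\<close>

definition outer :: "real^'d \<Rightarrow> real^'d^'d" where
  "outer u = (\<chi> i j. u $ i * u $ j)"

definition noise_cov :: "real \<Rightarrow> real^'d \<Rightarrow> real^'d \<Rightarrow> real^'d^'d" where
  "noise_cov \<sigma>p \<mu>p \<mu>m =
     (\<sigma>p ^ 2) *\<^sub>R (mat 1 - (1 / (norm \<mu>p)^2) *\<^sub>R outer \<mu>p - (1 / (norm \<mu>m)^2) *\<^sub>R outer \<mu>m)"

text \<open>N is the centered (possibly degenerate) Gaussian N(0, S) on R^d: every linear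
  functional u.x is distributed as the one-dimensional normal N(0, u^T S u)
  (a point mass at 0 if the variance is 0).\<close>
definition gaussian0 :: "(real^'d) measure \<Rightarrow> real^'d^'d \<Rightarrow> bool" where
  "gaussian0 N S \<longleftrightarrow> prob_space N \<and> sets N = sets borel \<and>
     (\<forall>u. let v = u \<bullet> (S *v u) in
        distr N borel (\<lambda>x. u \<bullet> x) =
          (if v = 0 then return borel 0 else density lborel (normal_density 0 (sqrt v))))"

definition sample_given :: "'m::finite \<Rightarrow> real^'d \<Rightarrow> real^'d \<Rightarrow> (real^'d) measure \<Rightarrow> real
    \<Rightarrow> (real^'d^'m) measure" where
  "sample_given i0 \<mu>p \<mu>m N y =
     distr (PiM UNIV (\<lambda>i. if i = i0 then return borel (if y = 1 then \<mu>p else \<mu>m) else N))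
           borel (\<lambda>x. vec_lambda x)"

definition data_dist :: "'m::finite \<Rightarrow> real^'d \<Rightarrow> real^'d \<Rightarrow> (real^'d) measure
    \<Rightarrow> ((real^'d^'m) \<times> real) measure" where
  "data_dist i0 \<mu>p \<mu>m N =
     bind (measure_pmf (pmf_of_set {-1, 1}))
       (\<lambda>y. distr (sample_given i0 \<mu>p \<mu>m N y) (borel \<Otimes>\<^sub>M borel) (\<lambda>X. (X, y)))"

definition pert_set :: "real^'d^'m \<Rightarrow> real \<Rightarrow> (real^'d^'m) set" where
  "pert_set X \<tau> = {X'. \<forall>i. norm (X' $ i - X $ i) \<le> \<tau>}"

definition rob_loss :: "(real^'d^'m \<Rightarrow> real) \<Rightarrow> real \<Rightarrow> real^'d^'m \<Rightarrow> real \<Rightarrow> ennreal" where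
  "rob_loss f \<tau> X y = (if \<exists>X'\<in>pert_set X \<tau>. y * f X' \<le> 0 then 1 else 0)"

definition rob_error :: "((real^'d^'m) \<times> real) measure \<Rightarrow> (real^'d^'m \<Rightarrow> real) \<Rightarrow> real \<Rightarrow> ennreal" where
  "rob_error D f \<tau> = (\<integral>\<^sup>+ z. rob_loss f \<tau> (fst z) (snd z) \<partial>D)"

end

theory Submission
  imports Defs
begin

lemma vec_lambda_meas:
  fixes P :: "'m::finite \<Rightarrow> (real^'d) measure"
  assumes "\<And>i. sets (P i) = sets borel"
  shows "(\<lambda>x. vec_lambda x :: real^'d^'m) \<in> borel_measurable (PiM UNIV P)"
proof (subst borel_measurable_euclidean_space, intro ballI)
  fix b :: "real^'d^'m" assume "b \<in> Basis"
  then obtain i u where b: "b = axis i u" "u \<in> Basis" by (auto simp: Basis_vec_def)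
  have m: "(\<lambda>x. x i) \<in> borel_measurable (PiM UNIV P)"
    using measurable_component_singleton[of i UNIV P] assms
    by (metis UNIV_I measurable_cong_sets)
  have "(\<lambda>x. x i \<bullet> u) \<in> borel_measurable (PiM UNIV P)"
    using m by (intro borel_measurable_inner) auto
  then show "(\<lambda>x. vec_lambda x \<bullet> b) \<in> borel_measurable (PiM UNIV P)"
    by (simp add: b inner_axis)
qed

lemma rob_key:
  fixes f :: "real^'d^'m::finite \<Rightarrow> real" and x :: "'m \<Rightarrow> real^'d"
  assumes "norm a \<le> \<tau>" "norm b \<le> \<tau>"
  shows "1 \<le> rob_loss f \<tau> (vec_lambda (\<lambda>j. if j = i0 then a else x j)) 1
            + rob_loss f \<tau> (vec_lambda (\<lambda>j. if j = i0 then b else x j)) (-1)"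
proof -
  define X' where "X' = vec_lambda (\<lambda>j. if j = i0 then 0 else x j)"
  have t0: "0 \<le> \<tau>" using assms(1) norm_ge_zero order_trans by blast
  have inA: "X' \<in> pert_set (vec_lambda (\<lambda>j. if j = i0 then a else x j)) \<tau>"
    using assms t0 by (auto simp: pert_set_def X'_def)
  have inB: "X' \<in> pert_set (vec_lambda (\<lambda>j. if j = i0 then b else x j)) \<tau>"
    using assms t0 by (auto simp: pert_set_def X'_def)
  show ?thesis
  proof (cases "f X' \<le> 0")
    case True
    then have "rob_loss f \<tau> (vec_lambda (\<lambda>j. if j = i0 then a else x j)) 1 = 1"
      using inA unfolding rob_loss_def by auto
    then show ?thesis by simp
  next
    case False
    then have "rob_loss f \<tau> (vec_lambda (\<lambda>j. if j = i0 then b else x j)) (-1) = 1"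
      using inB unfolding rob_loss_def by (auto intro!: bexI[of _ X'])
    then show ?thesis by simp
  qed
qed

theorem mainTheorem2:
  fixes \<mu>p \<mu>m :: "real^'d" and \<sigma>p \<tau> :: real and i0 :: "'m::finite"
    and N :: "(real^'d) measure" and f :: "real^'d^'m \<Rightarrow> real"
  assumes "norm \<mu>p = norm \<mu>m"
    and "\<mu>p \<bullet> \<mu>m = 0"
    and "gaussian0 N (noise_cov \<sigma>p \<mu>p \<mu>m)"
    and "(\<lambda>z. rob_loss f \<tau> (fst z) (snd z)) \<in> borel_measurable (data_dist i0 \<mu>p \<mu>m N)"
    and "\<tau> \<ge> norm \<mu>p"
  shows "rob_error (data_dist i0 \<mu>p \<mu>m N) f \<tau> \<ge> 1/4"
proof -
  note nrm = assms(1) and gs = assms(3) and gmeas = assms(4) and tau = assms(5)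
  have pN: "prob_space N" and sN: "sets N = sets borel" using gs by (auto simp: gaussian0_def)
  define c :: "real \<Rightarrow> real^'d" where "c y = (if y = 1 then \<mu>p else \<mu>m)" for y
  define P where "P y = (\<lambda>i. if i = i0 then return borel (c y) else N)" for y
  define S where "S y = sample_given i0 \<mu>p \<mu>m N y" for y
  define K where "K y = distr (S y) (borel \<Otimes>\<^sub>M borel) (\<lambda>X. (X, y))" for y
  define g where "g z = rob_loss f \<tau> (fst z) (snd z)" for z
  define I where "I = UNIV - {i0}"
  have S_eq: "S y = distr (PiM UNIV (P y)) borel vec_lambda" for y
    unfolding S_def sample_given_def P_def c_def ..
  have sP: "sets (P y i) = sets borel" for y i
    using sN by (auto simp: P_def)
  have pP: "prob_space (P y i)" for y i
    using pN by (auto simp: P_def intro: prob_space_return)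
  have pPi: "prob_space (PiM UNIV (P y))" for y
    by (rule prob_space_PiM) (use pP in auto)
  have vm: "(\<lambda>x. vec_lambda x :: real^'d^'m) \<in> borel_measurable (PiM UNIV (P y))" for y
    by (rule vec_lambda_meas) (rule sP)
  have sS: "sets (S y) = sets borel" for y
    by (simp add: S_eq)
  have pS: "prob_space (S y)" for y
    unfolding S_eq by (rule prob_space.prob_space_distr[OF pPi vm])
  have pairm: "(\<lambda>X. (X, y)) \<in> measurable (S y) (borel \<Otimes>\<^sub>M borel)" for y
    by (intro measurable_Pair measurable_ident_sets sS measurable_const) auto
  have sK: "sets (K y) = sets (borel \<Otimes>\<^sub>M borel)" for y
    by (simp add: K_def)
  have pK: "prob_space (K y)" for y
    unfolding K_def by (rule prob_space.prob_space_distr[OF pS pairm])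
  have Km: "K \<in> measurable (measure_pmf (pmf_of_set {-1, 1})) (subprob_algebra (borel \<Otimes>\<^sub>M borel))"
  proof -
    have "K \<in> measurable (count_space UNIV) (subprob_algebra (borel \<Otimes>\<^sub>M borel))"
      using pK sK by (auto simp: space_subprob_algebra intro: prob_space_imp_subprob_space)
    then show ?thesis
      using measurable_cong_sets[of "measure_pmf (pmf_of_set {-1, 1::real})" "count_space UNIV"
          "subprob_algebra (borel \<Otimes>\<^sub>M borel)" "subprob_algebra (borel \<Otimes>\<^sub>M borel)"]
      by auto
  qed
  have DD: "data_dist i0 \<mu>p \<mu>m N = measure_pmf (pmf_of_set {-1, 1}) \<bind> K"
    unfolding data_dist_def K_def S_def ..
  have sD: "sets (data_dist i0 \<mu>p \<mu>m N) = sets (borel \<Otimes>\<^sub>M borel)"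
    unfolding DD by (rule sets_bind) (auto simp: sK)
  have gm: "g \<in> borel_measurable (borel \<Otimes>\<^sub>M borel)"
  proof -
    have "measurable (data_dist i0 \<mu>p \<mu>m N) (borel :: ennreal measure) = measurable (borel \<Otimes>\<^sub>M borel) borel"
      by (rule measurable_cong_sets[OF sD refl])
    then show ?thesis using gmeas unfolding g_def by simp
  qed
  define F where "F y = (\<integral>\<^sup>+ z. g z \<partial>K y)" for y
  have E: "rob_error (data_dist i0 \<mu>p \<mu>m N) f \<tau> = (F (-1) + F 1) / 2"
  proof -
    have "rob_error (data_dist i0 \<mu>p \<mu>m N) f \<tau> = (\<integral>\<^sup>+ y. F y \<partial>measure_pmf (pmf_of_set {-1, 1}))"
      unfolding rob_error_def DD F_def g_def[symmetric]
      by (rule nn_integral_bind[OF gm Km])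
    also have "\<dots> = (F (-1) + F 1) / 2"
      by (subst nn_integral_pmf_of_set) auto
    finally show ?thesis .
  qed
  have hm: "(\<lambda>X. g (X, y)) \<in> borel_measurable (borel :: (real^'d^'m) measure)" for y
  proof -
    have "(\<lambda>X. g (X, y)) \<in> borel_measurable (S y)"
      using measurable_compose[OF pairm gm] by simp
    moreover have "measurable (S y) (borel :: ennreal measure) = measurable borel borel"
      by (rule measurable_cong_sets[OF sS refl])
    ultimately show ?thesis by simp
  qed
  have F1: "F y = (\<integral>\<^sup>+ x. g (vec_lambda x, y) \<partial>PiM UNIV (P y))" for y
  proof -
    have "F y = (\<integral>\<^sup>+ X. g (X, y) \<partial>S y)"
      unfolding F_def K_def by (subst nn_integral_distr[OF pairm]) (simp_all add: gm)
    also have "\<dots> = (\<integral>\<^sup>+ x. g (vec_lambda x, y) \<partial>PiM UNIV (P y))"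
      unfolding S_eq by (subst nn_integral_distr[OF vm]) (simp_all add: hm)
    finally show ?thesis .
  qed
  have spP: "space (P y i) = UNIV" for y i
    using sets_eq_imp_space_eq[OF sP[of y i]] by simp
  have UI: "insert i0 I = UNIV" by (auto simp: I_def)
  have updm: "(\<lambda>x. (\<lambda>j. if j = i0 then c y else x j)) \<in> measurable (PiM I (\<lambda>_. N)) (PiM UNIV (P y))" for y
  proof (rule measurable_PiM_single')
    fix j :: 'm
    show "(\<lambda>x. if j = i0 then c y else x j) \<in> measurable (PiM I (\<lambda>_. N)) (P y j)"
    proof (cases "j = i0")
      case True then show ?thesis using spP by simp
    next
      case False
      then have "j \<in> I" by (simp add: I_def)
      then show ?thesis using False by (simp add: P_def)
    qed
  qed (auto simp: spP)
  define A where "A y x = g (vec_lambda (\<lambda>j. if j = i0 then c y else x j), y)" for y x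
  have Am: "A y \<in> borel_measurable (PiM I (\<lambda>_. N))" for y
    unfolding A_def using measurable_compose[OF measurable_compose[OF updm vm] hm] by simp
  have F2: "F y = (\<integral>\<^sup>+ x. A y x \<partial>PiM I (\<lambda>_. N))" for y
  proof -
    interpret product_sigma_finite "P y"
      unfolding product_sigma_finite_def using pP by (simp add: prob_space_imp_sigma_finite)
    have "F y = (\<integral>\<^sup>+ x. g (vec_lambda x, y) \<partial>PiM (insert i0 I) (P y))"
      unfolding F1 UI ..
    also have "\<dots> = (\<integral>\<^sup>+ x. (\<integral>\<^sup>+ v. g (vec_lambda (x(i0 := v)), y) \<partial>P y i0) \<partial>PiM I (P y))"
      by (rule product_nn_integral_insert)
         (auto simp: I_def UI intro: measurable_compose[OF vm hm])
    also have "\<dots> = (\<integral>\<^sup>+ x. A y x \<partial>PiM I (P y))"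
    proof (rule nn_integral_cong)
      fix x assume "x \<in> space (PiM I (P y))"
      have um: "(\<lambda>v. (\<lambda>j. if j = i0 then v else x j)) \<in> measurable borel (PiM UNIV (P y))"
      proof (rule measurable_PiM_single')
        fix j :: 'm
        show "(\<lambda>v. if j = i0 then v else x j) \<in> measurable borel (P y j)"
        proof (cases "j = i0")
          case True then show ?thesis using measurable_ident_sets[OF sP[of y j, symmetric]] by simp
        next
          case False then show ?thesis using spP by simp
        qed
      qed (auto simp: spP)
      have "(\<integral>\<^sup>+ v. g (vec_lambda (x(i0 := v)), y) \<partial>P y i0)
          = (\<integral>\<^sup>+ v. g (vec_lambda (\<lambda>j. if j = i0 then v else x j), y) \<partial>return borel (c y))"
        by (simp add: P_def fun_upd_def)
      also have "\<dots> = A y x"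
        unfolding A_def
        by (rule nn_integral_return) (auto intro: measurable_compose[OF measurable_compose[OF um vm] hm])
      finally show "(\<integral>\<^sup>+ v. g (vec_lambda (x(i0 := v)), y) \<partial>P y i0) = A y x" .
    qed
    also have "PiM I (P y) = PiM I (\<lambda>_. N)"
      by (rule PiM_cong) (auto simp: P_def I_def)
    finally show ?thesis .
  qed
  have pI: "prob_space (PiM I (\<lambda>_. N))"
    by (rule prob_space_PiM) (use pN in auto)
  have "1 \<le> F (-1) + F 1"
  proof -
    have "F (-1) + F 1 = (\<integral>\<^sup>+ x. A (-1) x + A 1 x \<partial>PiM I (\<lambda>_. N))"
      unfolding F2 by (rule nn_integral_add[symmetric]) (auto intro: Am)
    also have "\<dots> \<ge> (\<integral>\<^sup>+ x. 1 \<partial>PiM I (\<lambda>_. N))"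
    proof (rule nn_integral_mono)
      fix x
      have "norm (c 1) \<le> \<tau>" "norm (c (-1)) \<le> \<tau>" using tau nrm by (auto simp: c_def)
      from rob_key[OF this, of f i0 x]
      show "1 \<le> A (-1) x + A 1 x" by (simp add: A_def g_def add.commute)
    qed
    also have "(\<integral>\<^sup>+ x. 1 \<partial>PiM I (\<lambda>_. N)) = 1"
      using prob_space.emeasure_space_1[OF pI] by simp
    finally show ?thesis by simp
  qed
  then have "1 / 2 \<le> (F (-1) + F 1) / 2"
    by (rule divide_right_mono_ennreal)
  moreover have "(1/4 :: ennreal) \<le> 1 / 2"
  proof -
    have a: "(1/4 :: ennreal) = ennreal (1/4)"
      by (simp add: divide_ennreal[symmetric] ennreal_numeral[symmetric] del: ennreal_numeral)
    have b: "(1/2 :: ennreal) = ennreal (1/2)" using divide_ennreal[of 1 2] by simp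
    show ?thesis unfolding a b by (rule ennreal_leI) simp
  qed
  ultimately show ?thesis unfolding E by (meson order_trans)
qed

end
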